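(* Let $n_x,n_y,n_z$ be pairwise relatively prime positive integers. Every knot in $\mathcal{L}(n_x,n_y,n_z)$ can be represented (up to mirror image) as a Lissajous knot with frequencies $(n_x,n_y,n_z)$, with $\phi_x=0$, and with phase shift pair $(\phi_y,\phi_z)\in[0,\frac{\pi}{n_x}]\times[0,\pi]$.
   Context: A Lissajous knot is a knot in $\mathbb{R}^3$ admitting a parameterization $K(t)=(\cos(n_xt+\phi_x),\cos(n_yt+\phi_y),\cos(n_zt+\phi_z))$, $0\le t\le 2\pi$, where the frequencies $n_x,n_y,n_z$ are integers and the phase shifts $\phi_x,\phi_y,\phi_z$ are real numbers (chosen so that the curve is embedded). $\mathcal{L}(n_x,n_y,n_z)$ denotes the set of knot types of all Lissajous knots with frequencies $n_x,n_y,n_z$, where a knot and its mirror image are considered equivalent. *)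

theory Defs
  imports "HOL-Analysis.Analysis"
begin

type_synonym R3 = "real \<times> real \<times> real"

definition lissajous :: "nat \<Rightarrow> nat \<Rightarrow> nat \<Rightarrow> real \<Rightarrow> real \<Rightarrow> real \<Rightarrow> real \<Rightarrow> R3" where
  "lissajous nx ny nz px py pz t =
     (cos (real nx * t + px), cos (real ny * t + py), cos (real nz * t + pz))"

definition is_lissajous_knot :: "nat \<Rightarrow> nat \<Rightarrow> nat \<Rightarrow> real \<Rightarrow> real \<Rightarrow> real \<Rightarrow> bool" where
  "is_lissajous_knot nx ny nz px py pz \<longleftrightarrow>
     inj_on (lissajous nx ny nz px py pz) {0..<2*pi}"

definition lissajous_image :: "nat \<Rightarrow> nat \<Rightarrow> nat \<Rightarrow> real \<Rightarrow> real \<Rightarrow> real \<Rightarrow> R3 set" where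
  "lissajous_image nx ny nz px py pz = lissajous nx ny nz px py pz ` {0..2*pi}"

definition ambient_isotopic :: "R3 set \<Rightarrow> R3 set \<Rightarrow> bool" where
  "ambient_isotopic K1 K2 \<longleftrightarrow>
     (\<exists>H :: R3 \<times> real \<Rightarrow> R3.
        continuous_on (UNIV \<times> {0..1}) H \<and>
        (\<forall>t\<in>{0..1}. \<exists>g. homeomorphism UNIV UNIV (\<lambda>x. H (x, t)) g) \<and>
        (\<forall>x. H (x, 0) = x) \<and>
        (\<lambda>x. H (x, 1)) ` K1 = K2)"

definition mirror :: "R3 \<Rightarrow> R3" where
  "mirror p = (fst p, fst (snd p), - snd (snd p))"

definition knot_equiv_mirror :: "R3 set \<Rightarrow> R3 set \<Rightarrow> bool" where
  "knot_equiv_mirror K1 K2 \<longleftrightarrow> ambient_isotopic K1 K2 \<or> ambient_isotopic K1 (mirror ` K2)"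

end

theory Submission imports Defs begin

lemma cos_shift_int: "cos ((x::real) + 2*pi * of_int k) = cos x"
  by (simp add: cos_add)

lemma liss_period: "lissajous nx ny nz px py pz (t + 2*pi * of_int k) = lissajous nx ny nz px py pz t"
proof -
  have "\<And>n::nat. \<And>p. cos (real n * (t + 2*pi * of_int k) + p) = cos (real n * t + p)"
  proof -
    fix n :: nat and p
    have "real n * (t + 2*pi * of_int k) + p = (real n * t + p) + 2*pi * of_int (int n * k)"
      by (simp add: algebra_simps)
    then show "cos (real n * (t + 2*pi * of_int k) + p) = cos (real n * t + p)"
      by (simp only: cos_shift_int)
  qed
  then show ?thesis by (simp add: lissajous_def)
qed

lemma reduce:
  fixes t :: real
  obtains k :: int where "t + 2*pi * of_int k \<in> {0..<2*pi}"
proof -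
  let ?k = "- floor (t / (2*pi))"
  define x where "x = t/(2*pi)"
  have tx: "x*(2*pi) = t" unfolding x_def by simp
  have "of_int (floor x) * (2*pi) \<le> x*(2*pi)" by (rule mult_right_mono) auto
  moreover have "x*(2*pi) < (of_int (floor x) + 1) * (2*pi)" by (rule mult_strict_right_mono) auto
  ultimately have "2*pi*floor (t/(2*pi)) \<le> t" "t < 2*pi*(floor (t/(2*pi)) + 1)"
    using tx unfolding x_def by (simp_all add: algebra_simps)
  then have "t + 2*pi * of_int ?k \<in> {0..<2*pi}" by (simp add: algebra_simps)
  then show ?thesis by (rule that)
qed

definition Pinj :: "(real \<Rightarrow> 'a) \<Rightarrow> bool" where
  "Pinj L \<longleftrightarrow> (\<forall>s t. L s = L t \<longrightarrow> (\<exists>k::int. s = t + 2*pi * of_int k))"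

lemma inj_Pinj:
  assumes per: "\<And>t k. L (t + 2*pi * of_int k) = L t"
  shows "inj_on L {0..<2*pi} \<longleftrightarrow> Pinj L"
proof
  assume inj: "inj_on L {0..<2*pi}"
  show "Pinj L" unfolding Pinj_def
  proof (intro allI impI)
    fix s t assume eq: "L s = L t"
    obtain a :: int where a: "s + 2*pi * of_int a \<in> {0..<2*pi}" by (rule reduce)
    obtain b :: int where b: "t + 2*pi * of_int b \<in> {0..<2*pi}" by (rule reduce)
    have "L (s + 2*pi * of_int a) = L (t + 2*pi * of_int b)" using eq per by simp
    with inj a b have "s + 2*pi * of_int a = t + 2*pi * of_int b" by (auto dest: inj_onD)
    then have "s = t + 2*pi * of_int (b - a)" by (simp add: algebra_simps)
    then show "\<exists>k::int. s = t + 2*pi * of_int k" by blast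
  qed
next
  assume P: "Pinj L"
  show "inj_on L {0..<2*pi}"
  proof (rule inj_onI)
    fix s t assume s: "s \<in> {0..<2*pi}" and t: "t \<in> {0..<2*pi}" and eq: "L s = L t"
    then obtain k :: int where k: "s = t + 2*pi * of_int k" using P unfolding Pinj_def by blast
    have b: "0 \<le> s" "s < 2*pi" "0 \<le> t" "t < 2*pi" using s t by auto
    have h1: "2*pi * of_int k < 2*pi*1" and h2: "2*pi*(-1) < 2*pi * of_int k" using b k by linarith+
    have p: "0 < 2*pi" by simp
    have "of_int k < (1::real)" using mult_less_cancel_left_pos[OF p] h1 by metis
    moreover have "(-1::real) < of_int k" using mult_less_cancel_left_pos[OF p] h2 by metis
    ultimately have "k = 0" by linarith
    then show "s = t" using k by simp
  qed
qed

lemma image_range: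
  assumes per: "\<And>t k. L (t + 2*pi * of_int k) = L t"
  shows "L ` {0..2*pi} = range L"
proof
  show "range L \<subseteq> L ` {0..2*pi}"
  proof
    fix y assume "y \<in> range L"
    then obtain t where y: "y = L t" by auto
    obtain k :: int where k: "t + 2*pi * of_int k \<in> {0..<2*pi}" by (rule reduce)
    then show "y \<in> L ` {0..2*pi}" using per[of t k] y by (auto intro!: image_eqI[of _ _ "t + 2*pi * of_int k"])
  qed
qed auto


definition sgnmap :: "real \<Rightarrow> real \<Rightarrow> real \<Rightarrow> R3 \<Rightarrow> R3" where
  "sgnmap a b c p = (a * fst p, b * fst (snd p), c * snd (snd p))"

lemma iso_lemma:
  fixes H :: "R3 \<times> real \<Rightarrow> R3"
  assumes c: "continuous_on UNIV H" and h0: "\<And>x. H (x,0) = x" and h1: "\<And>x. H (x,1) = D x"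
    and inv: "\<And>x s. H (H (x,s), -s) = x"
  shows "ambient_isotopic K (D ` K)"
  unfolding ambient_isotopic_def
proof (rule exI[of _ H], intro conjI ballI allI)
  show "continuous_on (UNIV \<times> {0..1}) H" using c by (rule continuous_on_subset) auto
  show "H (x, 0) = x" for x by (rule h0)
  show "(\<lambda>x. H (x, 1)) ` K = D ` K" using h1 by simp
  fix t :: real
  have ct: "continuous_on UNIV (\<lambda>x. H (x,r))" for r
    by (rule continuous_on_compose2[OF c]) (auto intro: continuous_intros)
  show "\<exists>g. homeomorphism UNIV UNIV (\<lambda>x. H (x, t)) g"
  proof (intro exI homeomorphismI)
    show "continuous_on UNIV (\<lambda>x. H (x, t))" by (rule ct)
    show "continuous_on UNIV (\<lambda>x. H (x, -t))" by (rule ct)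
    show "H (H (x, t), - t) = x" for x by (rule inv)
    show "H (H (y, -t), t) = y" for y using inv[of y "-t"] by simp
    show "range (\<lambda>x. H (x, t)) \<subseteq> UNIV" by simp
    show "range (\<lambda>x. H (x, -t)) \<subseteq> UNIV" by simp
  qed
qed

lemma rot_inv_aux:
  fixes x y a :: real
  shows "(x * cos a - y * sin a) * cos a + (x * sin a + y * cos a) * sin a = x"
    and "(x * sin a + y * cos a) * cos a - (x * cos a - y * sin a) * sin a = y"
proof -
  have h: "x * (cos a * cos a) + x * (sin a * sin a) = x" for x
    by (simp flip: distrib_left)
  have "(x * cos a - y * sin a) * cos a + (x * sin a + y * cos a) * sin a = x * (cos a * cos a) + x * (sin a * sin a)"
    by (simp add: algebra_simps)
  then show "(x * cos a - y * sin a) * cos a + (x * sin a + y * cos a) * sin a = x" using h by simp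
  have "(x * sin a + y * cos a) * cos a - (x * cos a - y * sin a) * sin a = y * (cos a * cos a) + y * (sin a * sin a)"
    by (simp add: algebra_simps)
  then show "(x * sin a + y * cos a) * cos a - (x * cos a - y * sin a) * sin a = y" using h by simp
qed

definition rot12 :: "R3 \<times> real \<Rightarrow> R3" where
  "rot12 q = (let x = fst (fst q); y = fst (snd (fst q)); z = snd (snd (fst q)); a = pi * snd q in
     (x * cos a - y * sin a, x * sin a + y * cos a, z))"
definition rot13 :: "R3 \<times> real \<Rightarrow> R3" where
  "rot13 q = (let x = fst (fst q); y = fst (snd (fst q)); z = snd (snd (fst q)); a = pi * snd q in
     (x * cos a - z * sin a, y, x * sin a + z * cos a))"
definition rot23 :: "R3 \<times> real \<Rightarrow> R3" where
  "rot23 q = (let x = fst (fst q); y = fst (snd (fst q)); z = snd (snd (fst q)); a = pi * snd q in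
     (x, y * cos a - z * sin a, y * sin a + z * cos a))"

lemma iso12: "ambient_isotopic K (sgnmap (-1) (-1) 1 ` K)"
  by (rule iso_lemma[of rot12])
     (auto simp: rot12_def sgnmap_def Let_def rot_inv_aux intro!: continuous_intros)
lemma iso13: "ambient_isotopic K (sgnmap (-1) 1 (-1) ` K)"
  by (rule iso_lemma[of rot13])
     (auto simp: rot13_def sgnmap_def Let_def rot_inv_aux intro!: continuous_intros)
lemma iso23: "ambient_isotopic K (sgnmap 1 (-1) (-1) ` K)"
  by (rule iso_lemma[of rot23])
     (auto simp: rot23_def sgnmap_def Let_def rot_inv_aux intro!: continuous_intros)
lemma iso_id: "ambient_isotopic K (sgnmap 1 1 1 ` K)"
  by (rule iso_lemma[of fst]) (auto simp: sgnmap_def intro!: continuous_intros)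


lemma sin_kpi: "sin (of_int k * pi) = 0"
  by (simp add: sin_times_pi_eq_0)

lemma cos_kpi: "cos (x + of_int k * pi) = cos (of_int k * pi) * cos x"
  by (simp add: cos_add sin_kpi)

lemma cos_kpi_pm: "cos (of_int k * pi) = 1 \<or> cos (of_int k * pi) = -1"
proof -
  have "(sin (of_int k * pi))^2 + (cos (of_int k * pi))^2 = 1" by simp
  then have "(cos (of_int k * pi))^2 = 1" by (simp add: sin_kpi)
  then show ?thesis by (simp add: power2_eq_1_iff)
qed

lemma cos_flip:
  assumes "y = x + of_int k * pi"
  shows "cos y = cos (of_int k * pi) * cos x"
  using assms cos_kpi by simp

lemma ambient_sgn:
  assumes "a = 1 \<or> a = -1" "b = 1 \<or> b = -1" "c = 1 \<or> c = -1" "a * b * c = 1"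
  shows "ambient_isotopic K (sgnmap a b c ` K)"
  using assms iso12 iso13 iso23 iso_id by auto

lemma mirror_sgn: "mirror ` sgnmap a b c ` K = sgnmap a b (-c) ` K"
  by (auto simp: image_image mirror_def sgnmap_def)

lemma equiv_sgn:
  assumes "a = 1 \<or> a = -1" "b = 1 \<or> b = -1" "c = 1 \<or> c = -1"
  shows "knot_equiv_mirror K (sgnmap a b c ` K)"
proof (cases "a * b * c = 1")
  case True
  then show ?thesis using ambient_sgn assms unfolding knot_equiv_mirror_def by blast
next
  case False
  then have "a * b * (-c) = 1" using assms by auto
  then have "ambient_isotopic K (sgnmap a b (-c) ` K)" using ambient_sgn assms by auto
  then show ?thesis unfolding knot_equiv_mirror_def mirror_sgn by blast
qed

lemma sgn_inj:
  assumes "a \<noteq> 0" "b \<noteq> 0" "c \<noteq> 0"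
  shows "inj (sgnmap a b c)"
  using assms by (auto simp: inj_def sgnmap_def prod_eq_iff)

lemma transfer:
  fixes L L' :: "real \<Rightarrow> R3"
  assumes perL: "\<And>t k. L (t + 2*pi * of_int k) = L t"
    and perL': "\<And>t k. L' (t + 2*pi * of_int k) = L' t"
    and rel: "\<And>t. L' t = D (L (t + c))" and iD: "inj D"
  shows "inj_on L {0..<2*pi} \<Longrightarrow> inj_on L' {0..<2*pi}"
    and "L' ` {0..2*pi} = D ` (L ` {0..2*pi})"
proof -
  assume "inj_on L {0..<2*pi}"
  then have P: "Pinj L" using inj_Pinj[OF perL] by blast
  have "Pinj L'" unfolding Pinj_def
  proof (intro allI impI)
    fix s t assume "L' s = L' t"
    then have "D (L (s + c)) = D (L (t + c))" using rel by simp
    then have "L (s + c) = L (t + c)" by (rule injD[OF iD])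
    then obtain k :: int where "s + c = t + c + 2*pi * of_int k" using P unfolding Pinj_def by blast
    then show "\<exists>k::int. s = t + 2*pi * of_int k" by (intro exI[of _ k]) simp
  qed
  then show "inj_on L' {0..<2*pi}" using inj_Pinj[OF perL'] by blast
next
  have "range L' = D ` range L"
  proof
    show "range L' \<subseteq> D ` range L" using rel by auto
    show "D ` range L \<subseteq> range L'"
    proof
      fix y assume "y \<in> D ` range L"
      then obtain t where "y = D (L t)" by auto
      then have "y = L' (t - c)" using rel[of "t - c"] by simp
      then show "y \<in> range L'" by simp
    qed
  qed
  then show "L' ` {0..2*pi} = D ` (L ` {0..2*pi})"
    using image_range[OF perL] image_range[OF perL'] by simp
qed

theorem theorem3:
  fixes nx ny nz :: nat and px py pz :: real
  assumes "nx > 0" "ny > 0" "nz > 0"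
    and "coprime nx ny" "coprime nx nz" "coprime ny nz"
    and "is_lissajous_knot nx ny nz px py pz"
  shows "\<exists>qy qz. qy \<in> {0..pi / real nx} \<and> qz \<in> {0..pi} \<and>
           is_lissajous_knot nx ny nz 0 qy qz \<and>
           knot_equiv_mirror (lissajous_image nx ny nz px py pz)
                             (lissajous_image nx ny nz 0 qy qz)"
proof -
  have nxp: "real nx > 0" using assms(1) by simp
  have "coprime (int nx) (int ny)" using assms(4) by simp
  then have "gcd (int ny) (int nx) = 1" by (simp add: coprime_iff_gcd_eq_1 gcd.commute)
  then obtain u v :: int where uv: "u * int ny + v * int nx = 1" using bezout_int[of "int ny" "int nx"] by auto
  define a where "a = py - real ny * px / real nx"
  define j :: int where "j = - floor (a * real nx / pi)"
  define k where "k = j * u"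
  define m where "m = j * v"
  define c where "c = (of_int k * pi - px) / real nx"
  define qy where "qy = a + of_int j * pi / real nx"
  define w where "w = real nz * c + pz"
  define l :: int where "l = - floor (w / pi)"
  define qz where "qz = w + of_int l * pi"
  have jk: "real ny * of_int k + of_int m * real nx = of_int j"
  proof -
    have "of_int (j * (u * int ny + v * int nx)) = (of_int j :: real)" using uv by simp
    then show ?thesis unfolding k_def m_def by (simp add: algebra_simps)
  qed
  have qy_rng: "qy \<in> {0..pi / real nx}"
  proof -
    define r where "r = a * real nx / pi"
    have "of_int (floor r) \<le> r" "r < of_int (floor r) + 1" by linarith+
    then have "0 \<le> r - of_int (floor r)" "r - of_int (floor r) \<le> 1" by linarith+
    moreover have "qy = (r - of_int (floor r)) * (pi / real nx)"
      unfolding qy_def r_def j_def using nxp by (simp add: field_simps)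
    moreover have "0 \<le> pi / real nx" using nxp by simp
    ultimately show ?thesis using mult_right_mono[of "r - of_int (floor r)" 1 "pi / real nx"]
      by auto
  qed
  have qz_rng: "qz \<in> {0..pi}"
  proof -
    define r where "r = w / pi"
    have "of_int (floor r) \<le> r" "r < of_int (floor r) + 1" by linarith+
    then have "0 \<le> r - of_int (floor r)" "r - of_int (floor r) \<le> 1" by linarith+
    moreover have "qz = (r - of_int (floor r)) * pi"
      unfolding qz_def r_def l_def by (simp add: field_simps)
    ultimately show ?thesis using mult_right_mono[of "r - of_int (floor r)" 1 pi]
      by auto
  qed
  define e1 where "e1 = cos (of_int k * pi)"
  define e2 where "e2 = cos (of_int m * pi)"
  define e3 where "e3 = cos (of_int l * pi)"
  have e1: "e1 = 1 \<or> e1 = -1" and e2: "e2 = 1 \<or> e2 = -1" and e3: "e3 = 1 \<or> e3 = -1"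
    unfolding e1_def e2_def e3_def by (rule cos_kpi_pm)+
  let ?L = "lissajous nx ny nz px py pz"
  let ?L' = "lissajous nx ny nz 0 qy qz"
  have rel: "?L' t = sgnmap e1 e2 e3 (?L (t + c))" for t
  proof -
    have x: "real nx * (t + c) + px = real nx * t + of_int k * pi"
      unfolding c_def using nxp by (simp add: field_simps)
    have y: "real ny * t + qy = (real ny * (t + c) + py) + of_int m * pi"
    proof -
      have "real ny * t + qy = real ny * t + a + (real ny * of_int k + of_int m * real nx) * pi / real nx"
        unfolding qy_def jk by simp
      also have "\<dots> = (real ny * (t + c) + py) + of_int m * pi"
        unfolding a_def c_def using nxp by (simp add: field_simps)
      finally show ?thesis .
    qed
    have z: "real nz * t + qz = (real nz * (t + c) + pz) + of_int l * pi"
      unfolding qz_def w_def by (simp add: algebra_simps)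
    have cx: "cos (real nx * t) = e1 * cos (real nx * (t + c) + px)"
      unfolding x e1_def cos_kpi using e1 e1_def by auto
    have cy: "cos (real ny * t + qy) = e2 * cos (real ny * (t + c) + py)"
      unfolding y e2_def by (rule cos_kpi)
    have cz: "cos (real nz * t + qz) = e3 * cos (real nz * (t + c) + pz)"
      unfolding z e3_def by (rule cos_kpi)
    show ?thesis using cx cy cz by (simp add: lissajous_def sgnmap_def)
  qed
  have injD: "inj (sgnmap e1 e2 e3)" using e1 e2 e3 by (intro sgn_inj) auto
  note tr = transfer[OF liss_period liss_period rel injD]
  have "is_lissajous_knot nx ny nz 0 qy qz"
    using assms(7) tr(1) unfolding is_lissajous_knot_def by blast
  moreover have "knot_equiv_mirror (lissajous_image nx ny nz px py pz) (lissajous_image nx ny nz 0 qy qz)"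
    unfolding lissajous_image_def tr(2) by (rule equiv_sgn[OF e1 e2 e3])
  ultimately show ?thesis using qy_rng qz_rng by blast
qed

end
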